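(* Let $\Sigma\subseteq\mathbb{C}$ be a nonempty compact set, let $L$ be a bounded band operator on $\ell^2(\mathbb{Z})$ with $LS=SL$, let $\gamma\in\mathbb{Z}$, and for $u\in\Sigma^{\mathbb{Z}}$ put $H(u):=L+S^\gamma M_u$. If $b,c\in\Sigma^{\mathbb{Z}}$ satisfy $\mathcal{W}(b)\subseteq\mathcal{W}(c)$, then $\nu(H(b))\ge\nu(H(c))$ and \[ \|(H(b)-\lambda)^{-1}\|\le\|(H(c)-\lambda)^{-1}\|\quad\text{for all }\lambda\in\mathbb{C}, \] so that $\sigma(H(b))\subseteq\sigma(H(c))$ and $\sigma_\varepsilon(H(b))\subseteq\sigma_\varepsilon(H(c))$ for all $\varepsilon>0$.
   Context: $(Sx)_n=x_{n-1}$ on $\ell^2(\mathbb{Z})$; $(M_ux)_n=u_nx_n$. A band operator is a finite sum $\sum_{k=-w}^{w}M_{a^{(k)}}S^k$ with $a^{(k)}\in\ell^\infty(\mathbb{Z})$. $\mathcal{W}(u)$ is the set of all finite subwords of $u$, i.e. all words $(u(k),\dots,u(k+n-1))$ with $k\in\mathbb{Z}$, $n\ge 0$. The lower norm of a bounded operator $T$ is $\nu(T):=\inf\{\|Tx\|:\|x\|=1\}$. $\sigma_\varepsilon(T):=\{\lambda:\|(T-\lambda)^{-1}\|>1/\varepsilon\}$, with the convention $\|B^{-1}\|:=\infty$ if $B$ is not invertible. *)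

theory Defs
  imports "HOL-Analysis.Analysis" "HOL-Library.Extended_Real"
begin

text \<open>Operators are maps (int => complex) => (int => complex); all operators considered here
  (band operators) are given by pointwise finite formulas and so act on all sequences.\<close>

definition l2 :: "(int \<Rightarrow> complex) \<Rightarrow> bool" where
  "l2 x \<longleftrightarrow> (\<lambda>n. (cmod (x n))\<^sup>2) summable_on UNIV"

definition l2_space :: "(int \<Rightarrow> complex) set" where
  "l2_space = {x. l2 x}"

definition l2norm :: "(int \<Rightarrow> complex) \<Rightarrow> real" where
  "l2norm x = sqrt (\<Sum>\<^sub>\<infinity>n. (cmod (x n))\<^sup>2)"

definition shift :: "(int \<Rightarrow> complex) \<Rightarrow> (int \<Rightarrow> complex)" where
  "shift x = (\<lambda>n. x (n - 1))"

definition shift_pow :: "int \<Rightarrow> (int \<Rightarrow> complex) \<Rightarrow> (int \<Rightarrow> complex)" where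
  "shift_pow k x = (\<lambda>n. x (n - k))"

definition mult_op :: "(int \<Rightarrow> complex) \<Rightarrow> (int \<Rightarrow> complex) \<Rightarrow> (int \<Rightarrow> complex)" where
  "mult_op u x = (\<lambda>n. u n * x n)"

definition band_op :: "((int \<Rightarrow> complex) \<Rightarrow> (int \<Rightarrow> complex)) \<Rightarrow> bool" where
  "band_op T \<longleftrightarrow> (\<exists>(w::nat) (a :: int \<Rightarrow> int \<Rightarrow> complex).
      (\<forall>k. bounded (range (a k))) \<and>
      T = (\<lambda>x n. \<Sum>k\<in>{- int w..int w}. mult_op (a k) (shift_pow k x) n))"

definition op_minus_scalar ::
  "((int \<Rightarrow> complex) \<Rightarrow> (int \<Rightarrow> complex)) \<Rightarrow> complex \<Rightarrow> (int \<Rightarrow> complex) \<Rightarrow> (int \<Rightarrow> complex)" where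
  "op_minus_scalar T z x = (\<lambda>n. T x n - z * x n)"

definition l2_opnorm :: "((int \<Rightarrow> complex) \<Rightarrow> (int \<Rightarrow> complex)) \<Rightarrow> real" where
  "l2_opnorm T = Sup {l2norm (T x) | x. l2 x \<and> l2norm x \<le> 1}"

definition l2_invertible :: "((int \<Rightarrow> complex) \<Rightarrow> (int \<Rightarrow> complex)) \<Rightarrow> bool" where
  "l2_invertible T \<longleftrightarrow> bij_betw T l2_space l2_space \<and>
     (\<exists>C. \<forall>x. l2 x \<longrightarrow> l2norm x \<le> C * l2norm (T x))"

definition inv_norm :: "((int \<Rightarrow> complex) \<Rightarrow> (int \<Rightarrow> complex)) \<Rightarrow> ereal" where
  "inv_norm T = (if l2_invertible T then ereal (l2_opnorm (inv_into l2_space T)) else \<infinity>)"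

definition lower_norm :: "((int \<Rightarrow> complex) \<Rightarrow> (int \<Rightarrow> complex)) \<Rightarrow> real" where
  "lower_norm T = Inf {l2norm (T x) | x. l2 x \<and> l2norm x = 1}"

definition spectrum_l2 :: "((int \<Rightarrow> complex) \<Rightarrow> (int \<Rightarrow> complex)) \<Rightarrow> complex set" where
  "spectrum_l2 T = {z. \<not> l2_invertible (op_minus_scalar T z)}"

definition pseudospectrum_l2 :: "real \<Rightarrow> ((int \<Rightarrow> complex) \<Rightarrow> (int \<Rightarrow> complex)) \<Rightarrow> complex set" where
  "pseudospectrum_l2 \<epsilon> T = {z. inv_norm (op_minus_scalar T z) > ereal (1 / \<epsilon>)}"

definition subwords :: "(int \<Rightarrow> 'a) \<Rightarrow> 'a list set" where
  "subwords u = {map (\<lambda>i. u (k + int i)) [0..<n] | k n. True}"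

definition H_op :: "((int \<Rightarrow> complex) \<Rightarrow> (int \<Rightarrow> complex)) \<Rightarrow> int \<Rightarrow> (int \<Rightarrow> complex)
     \<Rightarrow> (int \<Rightarrow> complex) \<Rightarrow> (int \<Rightarrow> complex)" where
  "H_op L \<gamma> u x = (\<lambda>n. L x n + shift_pow \<gamma> (mult_op u x) n)"

end

theory Submission imports Defs begin
lemma diag_sub:
  fixes X :: "nat \<Rightarrow> int \<Rightarrow> complex"
  assumes "\<And>n m. cmod (X n m) \<le> R"
  shows "\<exists>l r. strict_mono r \<and> (\<forall>m. (\<lambda>n. X (r n) m) \<longlonglongrightarrow> l m)"
proof -
  define S where "S = PiE (UNIV::int set) (\<lambda>_. cball (0::complex) R)"
  have "compactin (product_topology (\<lambda>_. euclidean) UNIV) S"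
    unfolding S_def by (subst compactin_PiE) auto
  hence "compact S" by (simp add: euclidean_product_topology)
  hence "seq_compact S" by (rule compact_imp_seq_compact)
  moreover have "\<forall>n. X n \<in> S" using assms by (auto simp: S_def)
  ultimately obtain l r where "strict_mono r" "(X \<circ> r) \<longlonglongrightarrow> l" by (metis seq_compactE)
  moreover have "(\<lambda>n. X (r n) m) \<longlonglongrightarrow> l m" for m
  proof -
    have "isCont (\<lambda>x. x m :: complex) l"
      using continuous_on_product_coordinates[of m] continuous_on_eq_continuous_at open_UNIV by blast
    from isCont_tendsto_compose[OF this \<open>(X \<circ> r) \<longlonglongrightarrow> l\<close>] show ?thesis by (simp add: o_def)
  qed
  ultimately show ?thesis by blast
qed

lemma sq_nonneg': "0 \<le> (cmod (x n))\<^sup>2" by simp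

lemma l2_iff_bdd: "l2 x \<longleftrightarrow> (\<exists>B. \<forall>F. finite F \<longrightarrow> (\<Sum>n\<in>F. (cmod (x n))\<^sup>2) \<le> B)"
proof
  assume "l2 x"
  hence s: "(\<lambda>n. (cmod (x n))\<^sup>2) summable_on UNIV" by (simp add: l2_def)
  show "\<exists>B. \<forall>F. finite F \<longrightarrow> (\<Sum>n\<in>F. (cmod (x n))\<^sup>2) \<le> B"
    by (rule exI[of _ "\<Sum>\<^sub>\<infinity>n. (cmod (x n))\<^sup>2"]) (auto intro!: finite_sum_le_infsum[OF s])
next
  assume "\<exists>B. \<forall>F. finite F \<longrightarrow> (\<Sum>n\<in>F. (cmod (x n))\<^sup>2) \<le> B"
  then obtain B where B: "\<And>F. finite F \<Longrightarrow> (\<Sum>n\<in>F. (cmod (x n))\<^sup>2) \<le> B" by blast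
  show "l2 x" unfolding l2_def
    by (rule nonneg_bdd_above_summable_on) (auto intro!: bdd_aboveI[of _ B] B)
qed

lemma l2I: "(\<And>F. finite F \<Longrightarrow> (\<Sum>n\<in>F. (cmod (x n))\<^sup>2) \<le> B) \<Longrightarrow> l2 x"
  using l2_iff_bdd by blast

lemma l2norm_nonneg: "0 \<le> l2norm x"
  unfolding l2norm_def by (rule real_sqrt_ge_zero, rule infsum_nonneg) simp

lemma l2norm_sq: "(l2norm x)\<^sup>2 = (\<Sum>\<^sub>\<infinity>n. (cmod (x n))\<^sup>2)"
  unfolding l2norm_def by (rule real_sqrt_pow2) (rule infsum_nonneg, simp)

lemma l2_fin_le: "l2 x \<Longrightarrow> finite F \<Longrightarrow> (\<Sum>n\<in>F. (cmod (x n))\<^sup>2) \<le> (l2norm x)\<^sup>2"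
  unfolding l2norm_sq l2_def by (rule finite_sum_le_infsum) auto

lemma l2norm_leI:
  assumes "l2 x" "0 \<le> r" "\<And>F. finite F \<Longrightarrow> (\<Sum>n\<in>F. (cmod (x n))\<^sup>2) \<le> r\<^sup>2"
  shows "l2norm x \<le> r"
proof -
  have "(\<Sum>\<^sub>\<infinity>n. (cmod (x n))\<^sup>2) \<le> r\<^sup>2"
    using assms by (intro infsum_le_finite_sums) (auto simp: l2_def)
  hence "l2norm x \<le> sqrt (r\<^sup>2)" unfolding l2norm_def by (rule real_sqrt_le_mono)
  thus ?thesis using assms by simp
qed

lemma l2_coord: "l2 x \<Longrightarrow> cmod (x m) \<le> l2norm x"
proof -
  assume "l2 x"
  from l2_fin_le[OF this, of "{m}"] have "(cmod (x m))\<^sup>2 \<le> (l2norm x)\<^sup>2" by simp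
  thus ?thesis using l2norm_nonneg by (rule power2_le_imp_le)
qed

lemma l2norm_zero_imp: "l2 x \<Longrightarrow> l2norm x = 0 \<Longrightarrow> x = (\<lambda>_. 0)"
  using l2_coord by (fastforce)

lemma l2_zero: "l2 (\<lambda>_. 0)" by (rule l2I[of _ 0]) simp
lemma l2norm_zero: "l2norm (\<lambda>_. 0) = 0" by (simp add: l2norm_def)

lemma bij_shift: "bij (\<lambda>n::int. n - t)"
  by (rule bij_betwI[of _ _ _ "\<lambda>n. n + t"]) auto

lemma l2_shift_iff: "l2 (shift_pow t x) \<longleftrightarrow> l2 x"
  unfolding l2_def shift_pow_def
  using summable_on_reindex_bij_betw[OF bij_shift[of t], of "\<lambda>n. (cmod (x n))\<^sup>2"] by simp

lemma l2norm_shift: "l2norm (shift_pow t x) = l2norm x"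
  unfolding l2norm_def shift_pow_def
  using infsum_reindex_bij_betw[OF bij_shift[of t], of "\<lambda>n. (cmod (x n))\<^sup>2"] by simp

lemma shift_shift: "shift_pow s (shift_pow t x) = shift_pow (s + t) x"
  by (simp add: shift_pow_def algebra_simps)

lemma shift_0: "shift_pow 0 x = x" by (simp add: shift_pow_def)

lemma l2_add: assumes "l2 x" "l2 y" shows "l2 (\<lambda>n. x n + y n)"
proof -
  obtain A where A: "\<And>F. finite F \<Longrightarrow> (\<Sum>n\<in>F. (cmod (x n))\<^sup>2) \<le> A" using assms l2_iff_bdd by metis
  obtain B where B: "\<And>F. finite F \<Longrightarrow> (\<Sum>n\<in>F. (cmod (y n))\<^sup>2) \<le> B" using assms l2_iff_bdd by metis
  show ?thesis
  proof (rule l2I[of _ "2*A + 2*B"])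
    fix F :: "int set" assume F: "finite F"
    have "(\<Sum>n\<in>F. (cmod (x n + y n))\<^sup>2) \<le> (\<Sum>n\<in>F. 2*(cmod (x n))\<^sup>2 + 2*(cmod (y n))\<^sup>2)"
    proof (rule sum_mono)
      fix n
      have "cmod (x n + y n) \<le> cmod (x n) + cmod (y n)" by (rule norm_triangle_ineq)
      hence "(cmod (x n + y n))\<^sup>2 \<le> (cmod (x n) + cmod (y n))\<^sup>2" by (simp add: power_mono)
      also have "\<dots> \<le> 2*(cmod (x n))\<^sup>2 + 2*(cmod (y n))\<^sup>2"
        using zero_le_power2[of "cmod (x n) - cmod (y n)"] by (simp add: power2_diff power2_sum)
      finally show "(cmod (x n + y n))\<^sup>2 \<le> 2*(cmod (x n))\<^sup>2 + 2*(cmod (y n))\<^sup>2" .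
    qed
    also have "\<dots> = 2 * (\<Sum>n\<in>F. (cmod (x n))\<^sup>2) + 2 * (\<Sum>n\<in>F. (cmod (y n))\<^sup>2)"
      by (simp add: sum.distrib sum_distrib_left)
    also have "\<dots> \<le> 2*A + 2*B" using A[OF F] B[OF F] by simp
    finally show "(\<Sum>n\<in>F. (cmod (x n + y n))\<^sup>2) \<le> 2*A + 2*B" .
  qed
qed

lemma l2_mult: assumes "l2 x" "\<And>n. cmod (u n) \<le> M" shows "l2 (\<lambda>n. u n * x n)"
proof -
  obtain A where A: "\<And>F. finite F \<Longrightarrow> (\<Sum>n\<in>F. (cmod (x n))\<^sup>2) \<le> A" using assms l2_iff_bdd by metis
  show ?thesis
  proof (rule l2I[of _ "M\<^sup>2 * A"])
    fix F :: "int set" assume F: "finite F"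
    have "(\<Sum>n\<in>F. (cmod (u n * x n))\<^sup>2) \<le> (\<Sum>n\<in>F. M\<^sup>2 * (cmod (x n))\<^sup>2)"
    proof (rule sum_mono)
      fix n
      have "(cmod (u n))\<^sup>2 \<le> M\<^sup>2" using assms(2)[of n] by (simp add: power_mono)
      thus "(cmod (u n * x n))\<^sup>2 \<le> M\<^sup>2 * (cmod (x n))\<^sup>2"
        by (simp add: norm_mult power_mult_distrib mult_right_mono)
    qed
    also have "\<dots> \<le> M\<^sup>2 * A" using A[OF F] by (simp add: sum_distrib_left[symmetric] mult_left_mono)
    finally show "(\<Sum>n\<in>F. (cmod (u n * x n))\<^sup>2) \<le> M\<^sup>2 * A" .
  qed
qed

lemma l2_cmult: "l2 x \<Longrightarrow> l2 (\<lambda>n. a * x n)"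
  using l2_mult[of x "\<lambda>_. a" "cmod a"] by simp

lemma l2_diff: "l2 x \<Longrightarrow> l2 y \<Longrightarrow> l2 (\<lambda>n. x n - y n)"
  using l2_add[of x "\<lambda>n. (-1) * y n"] l2_cmult[of y "-1"] by simp

lemma l2_sum: "finite K \<Longrightarrow> (\<And>k. k \<in> K \<Longrightarrow> l2 (f k)) \<Longrightarrow> l2 (\<lambda>n. \<Sum>k\<in>K. f k n)"
proof (induction K rule: finite_induct)
  case empty thus ?case using l2_zero by simp
next
  case (insert k K) thus ?case using l2_add[of "f k" "\<lambda>n. \<Sum>k\<in>K. f k n"] by simp
qed

lemma l2_triangle: assumes "l2 a" "l2 d" shows "l2norm (\<lambda>n. a n + d n) \<le> l2norm a + l2norm d"
proof (rule l2norm_leI)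
  show "l2 (\<lambda>n. a n + d n)" using assms by (rule l2_add)
  show "0 \<le> l2norm a + l2norm d" using l2norm_nonneg by (simp add: add_nonneg_nonneg)
  fix F :: "int set" assume F: "finite F"
  have "L2_set (\<lambda>n. cmod (a n + d n)) F \<le> L2_set (\<lambda>n. cmod (a n) + cmod (d n)) F"
    by (rule L2_set_mono) (auto simp: norm_triangle_ineq)
  also have "\<dots> \<le> L2_set (\<lambda>n. cmod (a n)) F + L2_set (\<lambda>n. cmod (d n)) F"
    by (rule L2_set_triangle_ineq)
  also have "L2_set (\<lambda>n. cmod (a n)) F \<le> l2norm a"
    unfolding L2_set_def using l2_fin_le[OF assms(1) F] l2norm_nonneg
    by (metis real_sqrt_abs real_sqrt_le_mono abs_of_nonneg)
  also have "L2_set (\<lambda>n. cmod (d n)) F \<le> l2norm d"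
    unfolding L2_set_def using l2_fin_le[OF assms(2) F] l2norm_nonneg
    by (metis real_sqrt_abs real_sqrt_le_mono abs_of_nonneg)
  finally have "sqrt (\<Sum>n\<in>F. (cmod (a n + d n))\<^sup>2) \<le> l2norm a + l2norm d"
    by (simp add: L2_set_def)
  moreover have "0 \<le> (\<Sum>n\<in>F. (cmod (a n + d n))\<^sup>2)" by (intro sum_nonneg) simp
  ultimately have "(sqrt (\<Sum>n\<in>F. (cmod (a n + d n))\<^sup>2))\<^sup>2 \<le> (l2norm a + l2norm d)\<^sup>2"
    by (intro power_mono) auto
  moreover have "0 \<le> (\<Sum>n\<in>F. (cmod (a n + d n))\<^sup>2)" by (intro sum_nonneg) simp
  ultimately show "(\<Sum>n\<in>F. (cmod (a n + d n))\<^sup>2) \<le> (l2norm a + l2norm d)\<^sup>2"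
    by simp
qed

lemma l2_fatou:
  assumes lim: "\<And>m. (\<lambda>n. X n m) \<longlonglongrightarrow> x m" and X: "\<And>n. l2 (X n)" "\<And>n. l2norm (X n) \<le> R"
  shows "l2 x \<and> l2norm x \<le> R"
proof -
  have R: "0 \<le> R" using X(2)[of 0] l2norm_nonneg order_trans by blast
  have fin: "(\<Sum>m\<in>F. (cmod (x m))\<^sup>2) \<le> R\<^sup>2" if F: "finite F" for F
  proof -
    have "(\<lambda>n. \<Sum>m\<in>F. (cmod (X n m))\<^sup>2) \<longlonglongrightarrow> (\<Sum>m\<in>F. (cmod (x m))\<^sup>2)"
      by (intro tendsto_intros lim)
    moreover have "(\<Sum>m\<in>F. (cmod (X n m))\<^sup>2) \<le> R\<^sup>2" for n
      using l2_fin_le[OF X(1) F, of n] X(2)[of n] l2norm_nonneg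
      by (meson order_trans power_mono)
    ultimately show ?thesis by (intro LIMSEQ_le_const2) auto
  qed
  hence "l2 x" by (rule l2I)
  thus ?thesis using l2norm_leI[OF _ R fin] by blast
qed

lemma l2_approx:
  assumes "l2 x" "0 < \<delta>"
  shows "\<exists>F. finite F \<and> (l2norm x)\<^sup>2 - \<delta> \<le> (\<Sum>n\<in>F. (cmod (x n))\<^sup>2)"
proof (rule ccontr)
  assume "\<not> ?thesis"
  hence lt: "\<And>F. finite F \<Longrightarrow> (\<Sum>n\<in>F. (cmod (x n))\<^sup>2) < (l2norm x)\<^sup>2 - \<delta>" by force
  from lt[of "{}"] have pos: "0 < (l2norm x)\<^sup>2 - \<delta>" by simp
  have "l2norm x \<le> sqrt ((l2norm x)\<^sup>2 - \<delta>)"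
    using pos lt by (intro l2norm_leI assms) (auto intro: less_imp_le)
  hence "(l2norm x)\<^sup>2 \<le> (sqrt ((l2norm x)\<^sup>2 - \<delta>))\<^sup>2" using l2norm_nonneg by (rule power_mono)
  thus False using pos assms by simp
qed

definition delta0 :: "int \<Rightarrow> complex" where "delta0 = (\<lambda>n. if n = 0 then 1 else 0)"

lemma delta0: "l2 delta0" "l2norm delta0 = 1"
proof -
  have s: "(\<Sum>n\<in>F. (cmod (delta0 n))\<^sup>2) = (if 0 \<in> F then 1 else 0)" if "finite F" for F
  proof -
    have eq: "(\<Sum>n\<in>F. (cmod (delta0 n))\<^sup>2) = (\<Sum>n\<in>F. if n = 0 then 1 else 0)" by (rule sum.cong) (auto simp: delta0_def)
    show ?thesis using that by (simp add: eq sum.delta)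
  qed
  show l: "l2 delta0" by (rule l2I[of _ 1]) (simp add: s)
  have "l2norm delta0 \<le> 1" by (rule l2norm_leI[OF l]) (auto simp: s)
  moreover have "1 \<le> l2norm delta0" using l2_coord[OF l, of 0] by (simp add: delta0_def)
  ultimately show "l2norm delta0 = 1" by simp
qed


definition Gop :: "(int \<Rightarrow> complex) \<Rightarrow> int set \<Rightarrow> int \<Rightarrow> (int \<Rightarrow> complex) \<Rightarrow> complex
    \<Rightarrow> (int \<Rightarrow> complex) \<Rightarrow> int \<Rightarrow> complex" where
  "Gop \<alpha> K \<gamma> u z x = (\<lambda>n. (\<Sum>k\<in>K. \<alpha> k * x (n - k)) + u (n - \<gamma>) * x (n - \<gamma>) - z * x n)"

lemma Gop_l2:
  assumes "finite K" "\<And>n. cmod (u n) \<le> M" "l2 x"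
  shows "l2 (Gop \<alpha> K \<gamma> u z x)"
proof -
  have a: "l2 (\<lambda>n. \<Sum>k\<in>K. \<alpha> k * x (n - k))"
    using assms(1) by (rule l2_sum) (intro l2_cmult, use assms(3) l2_shift_iff in \<open>auto simp: shift_pow_def\<close>)
  have b: "l2 (\<lambda>n. u (n - \<gamma>) * x (n - \<gamma>))"
    using l2_mult[OF assms(3) assms(2)] l2_shift_iff[of \<gamma> "\<lambda>n. u n * x n"] by (simp add: shift_pow_def)
  show ?thesis unfolding Gop_def
    by (intro l2_diff l2_add a b l2_cmult assms(3))
qed

lemma Gop_diff: "Gop \<alpha> K \<gamma> u z (\<lambda>n. x n - y n) = (\<lambda>n. Gop \<alpha> K \<gamma> u z x n - Gop \<alpha> K \<gamma> u z y n)"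
  by (simp add: Gop_def algebra_simps sum_subtractf)

lemma Gop_conj: "Gop \<alpha> K \<gamma> (\<lambda>m. u (m + s)) z x = shift_pow (-s) (Gop \<alpha> K \<gamma> u z (shift_pow s x))"
  by (simp add: Gop_def shift_pow_def algebra_simps)

lemma Gop_sub_u: "(\<lambda>n. Gop \<alpha> K \<gamma> u z x n - Gop \<alpha> K \<gamma> v z x n) = shift_pow \<gamma> (\<lambda>m. (u m - v m) * x m)"
  by (simp add: Gop_def shift_pow_def algebra_simps)

lemma Gop_tendsto:
  assumes "\<And>m. (\<lambda>n. X n m) \<longlonglongrightarrow> x m"
  shows "(\<lambda>n. Gop \<alpha> K \<gamma> u z (X n) p) \<longlonglongrightarrow> Gop \<alpha> K \<gamma> u z x p"
  unfolding Gop_def by (intro tendsto_intros assms)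

lemma subwords_match:
  assumes "subwords b \<subseteq> subwords c"
  shows "\<exists>s. \<forall>m. - int N \<le> m \<and> m \<le> int N \<longrightarrow> c (m + s) = b m"
proof -
  have "map (\<lambda>i. b (- int N + int i)) [0..<2*N+1] \<in> subwords b"
    unfolding subwords_def by blast
  with assms obtain k n where kn: "map (\<lambda>i. b (- int N + int i)) [0..<2*N+1] = map (\<lambda>i. c (k + int i)) [0..<n]"
    unfolding subwords_def by blast
  hence len: "n = 2*N+1" by (metis length_map length_upt minus_nat.diff_0)
  have eq: "b (- int N + int i) = c (k + int i)" if "i < 2*N+1" for i
    using arg_cong[OF kn, of "\<lambda>l. l ! i"] that len by (simp del: upt_Suc)
  show ?thesis
  proof (intro exI[of _ "k + int N"] allI impI)
    fix m assume m: "- int N \<le> m \<and> m \<le> int N"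
    define i where "i = nat (m + int N)"
    have "i < 2*N+1" using m unfolding i_def by linarith
    from eq[OF this] m show "c (m + (k + int N)) = b m" by (simp add: i_def algebra_simps)
  qed
qed


lemma Gop_approx:
  assumes K: "finite K" and bM: "\<And>n. cmod (b n) \<le> M" and cM: "\<And>n. cmod (c n) \<le> M"
    and W: "subwords b \<subseteq> subwords c" and x: "l2 x" and e: "0 < \<epsilon>"
  shows "\<exists>s. l2norm (\<lambda>n. Gop \<alpha> K \<gamma> (\<lambda>m. c (m + s)) z x n - Gop \<alpha> K \<gamma> b z x n) \<le> \<epsilon>"
proof -
  have M: "0 \<le> M" using bM[of 0] norm_ge_zero order_trans by blast
  define \<delta> where "\<delta> = \<epsilon>\<^sup>2 / (4*M\<^sup>2+1)"
  have dpos: "0 < \<delta>" using e unfolding \<delta>_def by (intro divide_pos_pos) (auto intro: add_nonneg_pos)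
  obtain F where F: "finite F" "(l2norm x)\<^sup>2 - \<delta> \<le> (\<Sum>n\<in>F. (cmod (x n))\<^sup>2)"
    using l2_approx[OF x dpos] by blast
  define N where "N = nat (Max (insert 0 (abs ` F)))"
  have FN: "- int N \<le> m \<and> m \<le> int N" if "m \<in> F" for m
  proof -
    have "\<bar>m\<bar> \<le> Max (insert 0 (abs ` F))" using F(1) that by (intro Max_ge) auto
    thus ?thesis unfolding N_def by linarith
  qed
  obtain s where s: "\<And>m. - int N \<le> m \<and> m \<le> int N \<Longrightarrow> c (m + s) = b m"
    using subwords_match[OF W, of N] by blast
  define d where "d = (\<lambda>m. (c (m + s) - b m) * x m)"
  have dM: "cmod (c (m + s) - b m) \<le> 2*M" for m
    using norm_triangle_ineq4[of "c (m+s)" "b m"] bM[of m] cM[of "m+s"] by linarith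
  have ld: "l2 d" unfolding d_def by (rule l2_mult[OF x dM])
  have "l2norm d \<le> \<epsilon>"
  proof (rule l2norm_leI[OF ld])
    show "0 \<le> \<epsilon>" using e by simp
    fix G :: "int set" assume G: "finite G"
    have z: "(\<Sum>m\<in>G \<inter> F. (cmod (d m))\<^sup>2) = 0"
      by (rule sum.neutral) (auto simp: d_def s FN)
    have "(\<Sum>m\<in>G. (cmod (d m))\<^sup>2) = (\<Sum>m\<in>G - F. (cmod (d m))\<^sup>2)"
      using sum.Int_Diff[OF G, of "\<lambda>m. (cmod (d m))\<^sup>2" F] z by simp
    also have "\<dots> \<le> (\<Sum>m\<in>G - F. (2*M)\<^sup>2 * (cmod (x m))\<^sup>2)"
    proof (rule sum_mono)
      fix m
      have "(cmod (c (m + s) - b m))\<^sup>2 \<le> (2*M)\<^sup>2" using dM[of m] by (intro power_mono) auto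
      thus "(cmod (d m))\<^sup>2 \<le> (2*M)\<^sup>2 * (cmod (x m))\<^sup>2"
        by (simp add: d_def norm_mult power_mult_distrib mult_right_mono)
    qed
    also have "\<dots> = (2*M)\<^sup>2 * (\<Sum>m\<in>G - F. (cmod (x m))\<^sup>2)" by (simp add: sum_distrib_left)
    also have "(\<Sum>m\<in>G - F. (cmod (x m))\<^sup>2) \<le> \<delta>"
    proof -
      have "(\<Sum>m\<in>G - F. (cmod (x m))\<^sup>2) + (\<Sum>m\<in>F. (cmod (x m))\<^sup>2) = (\<Sum>m\<in>(G - F) \<union> F. (cmod (x m))\<^sup>2)"
        using G F(1) by (intro sum.union_disjoint[symmetric]) auto
      also have "\<dots> \<le> (l2norm x)\<^sup>2" using G F(1) by (intro l2_fin_le x) auto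
      finally show ?thesis using F(2) by linarith
    qed
    also have "(2*M)\<^sup>2 * \<delta> \<le> \<epsilon>\<^sup>2"
    proof -
      have "(2*M)\<^sup>2 * \<delta> = \<epsilon>\<^sup>2 * (4*M\<^sup>2 / (4*M\<^sup>2+1))" by (simp add: \<delta>_def power_mult_distrib)
      also have "\<dots> \<le> \<epsilon>\<^sup>2 * 1" by (intro mult_left_mono) (auto simp: divide_le_eq_1 add_nonneg_pos)
      finally show ?thesis by simp
    qed
    finally show "(\<Sum>m\<in>G. (cmod (d m))\<^sup>2) \<le> \<epsilon>\<^sup>2" by (simp add: mult_left_mono)
  qed
  moreover have "(\<lambda>n. Gop \<alpha> K \<gamma> (\<lambda>m. c (m + s)) z x n - Gop \<alpha> K \<gamma> b z x n) = shift_pow \<gamma> d"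
    unfolding d_def by (rule Gop_sub_u)
  ultimately show ?thesis by (metis l2norm_shift)
qed

lemma Gop_transfer:
  assumes K: "finite K" and bM: "\<And>n. cmod (b n) \<le> M" and cM: "\<And>n. cmod (c n) \<le> M"
    and W: "subwords b \<subseteq> subwords c" and x: "l2 x" and e: "0 < \<epsilon>"
  shows "\<exists>y. l2 y \<and> l2norm y = l2norm x \<and> l2norm (Gop \<alpha> K \<gamma> c z y) \<le> l2norm (Gop \<alpha> K \<gamma> b z x) + \<epsilon>"
proof -
  obtain s where s: "l2norm (\<lambda>n. Gop \<alpha> K \<gamma> (\<lambda>m. c (m + s)) z x n - Gop \<alpha> K \<gamma> b z x n) \<le> \<epsilon>"
    using Gop_approx[OF K bM cM W x e] by blast
  define y where "y = shift_pow s x"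
  have y: "l2 y" "l2norm y = l2norm x" using x by (auto simp: y_def l2_shift_iff l2norm_shift)
  have "l2norm (Gop \<alpha> K \<gamma> c z y) = l2norm (Gop \<alpha> K \<gamma> (\<lambda>m. c (m + s)) z x)"
    by (simp add: Gop_conj y_def l2norm_shift)
  also have "Gop \<alpha> K \<gamma> (\<lambda>m. c (m + s)) z x = (\<lambda>n. Gop \<alpha> K \<gamma> b z x n + (Gop \<alpha> K \<gamma> (\<lambda>m. c (m + s)) z x n - Gop \<alpha> K \<gamma> b z x n))"
    by simp
  also have "l2norm \<dots> \<le> l2norm (Gop \<alpha> K \<gamma> b z x) + l2norm (\<lambda>n. Gop \<alpha> K \<gamma> (\<lambda>m. c (m + s)) z x n - Gop \<alpha> K \<gamma> b z x n)"
    using Gop_l2[OF K bM x] Gop_l2[OF K cM[of "_ + s"] x] by (intro l2_triangle l2_diff) auto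
  finally show ?thesis using s y by (intro exI[of _ y]) auto
qed


lemma Gop_lower_unit:
  assumes K: "finite K" and bM: "\<And>n. cmod (b n) \<le> M" and cM: "\<And>n. cmod (c n) \<le> M"
    and W: "subwords b \<subseteq> subwords c"
    and H: "\<And>y. l2 y \<Longrightarrow> l2norm y = 1 \<Longrightarrow> r \<le> l2norm (Gop \<alpha> K \<gamma> c z y)"
    and x: "l2 x" "l2norm x = 1"
  shows "r \<le> l2norm (Gop \<alpha> K \<gamma> b z x)"
proof (rule field_le_epsilon)
  fix e :: real assume e: "0 < e"
  obtain y where y: "l2 y" "l2norm y = l2norm x" "l2norm (Gop \<alpha> K \<gamma> c z y) \<le> l2norm (Gop \<alpha> K \<gamma> b z x) + e"
    using Gop_transfer[OF K bM cM W x(1) e] by blast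
  show "r \<le> l2norm (Gop \<alpha> K \<gamma> b z x) + e" using H[OF y(1)] y x(2) by force
qed

lemma Gop_lower_C:
  assumes K: "finite K" and bM: "\<And>n. cmod (b n) \<le> M" and cM: "\<And>n. cmod (c n) \<le> M"
    and W: "subwords b \<subseteq> subwords c" and C: "0 \<le> C"
    and H: "\<And>y. l2 y \<Longrightarrow> l2norm y \<le> C * l2norm (Gop \<alpha> K \<gamma> c z y)"
    and x: "l2 x"
  shows "l2norm x \<le> C * l2norm (Gop \<alpha> K \<gamma> b z x)"
proof (rule field_le_epsilon)
  fix e :: real assume e: "0 < e"
  have e': "0 < e / (C + 1)" using e C by simp
  obtain y where y: "l2 y" "l2norm y = l2norm x" "l2norm (Gop \<alpha> K \<gamma> c z y) \<le> l2norm (Gop \<alpha> K \<gamma> b z x) + e / (C + 1)"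
    using Gop_transfer[OF K bM cM W x e'] by blast
  have "l2norm x \<le> C * (l2norm (Gop \<alpha> K \<gamma> b z x) + e / (C + 1))"
    using H[OF y(1)] y(2) mult_left_mono[OF y(3) C] by linarith
  also have "\<dots> = C * l2norm (Gop \<alpha> K \<gamma> b z x) + e * (C / (C + 1))" by (simp add: algebra_simps)
  also have "e * (C / (C + 1)) \<le> e * 1" using e C by (intro mult_left_mono) auto
  finally show "l2norm x \<le> C * l2norm (Gop \<alpha> K \<gamma> b z x) + e" by simp
qed

lemma Gop_surj:
  assumes K: "finite K" and bM: "\<And>n. cmod (b n) \<le> M" and cM: "\<And>n. cmod (c n) \<le> M"
    and W: "subwords b \<subseteq> subwords c"
    and inv: "l2_invertible (Gop \<alpha> K \<gamma> c z)" and y: "l2 y"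
  shows "\<exists>x. l2 x \<and> Gop \<alpha> K \<gamma> b z x = y \<and>
     (\<forall>R. (\<forall>w. l2 w \<and> l2norm w = l2norm y \<longrightarrow> l2norm (inv_into l2_space (Gop \<alpha> K \<gamma> c z) w) \<le> R) \<longrightarrow> l2norm x \<le> R)"
proof -
  define T where "T = Gop \<alpha> K \<gamma> c z"
  define Ti where "Ti = inv_into l2_space T"
  have bij: "bij_betw T l2_space l2_space" using inv by (simp add: l2_invertible_def T_def)
  obtain C where C: "\<And>x. l2 x \<Longrightarrow> l2norm x \<le> C * l2norm (T x)" using inv by (auto simp: l2_invertible_def T_def)
  have Ti: "l2 (Ti w) \<and> T (Ti w) = w" if "l2 w" for w
  proof -
    have "w \<in> T ` l2_space" using bij_betw_imp_surj_on[OF bij] that by (simp add: l2_space_def)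
    thus ?thesis unfolding Ti_def using inv_into_into[of w T l2_space] f_inv_into_f[of w T l2_space]
      by (simp add: l2_space_def)
  qed
  have Tib: "l2norm (Ti w) \<le> C * l2norm w" if "l2 w" for w using C[of "Ti w"] Ti[OF that] by simp
  have "\<forall>N::nat. \<exists>s. \<forall>m. - int N \<le> m \<and> m \<le> int N \<longrightarrow> c (m + s) = b m"
    using subwords_match[OF W] by blast
  then obtain S where S: "\<And>N m. - int N \<le> m \<and> m \<le> int N \<Longrightarrow> c (m + S N) = b m" by metis
  define X where "X = (\<lambda>n. shift_pow (- S n) (Ti (shift_pow (S n) y)))"
  have wl2: "l2 (shift_pow (S n) y)" for n using y by (simp add: l2_shift_iff)
  have Xl2: "l2 (X n)" for n using Ti[OF wl2[of n]] by (simp add: X_def l2_shift_iff)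
  have Xn: "l2norm (X n) = l2norm (Ti (shift_pow (S n) y))" for n by (simp add: X_def l2norm_shift)
  have Xb: "cmod (X n m) \<le> C * l2norm y" for n m
    using l2_coord[OF Xl2[of n], of m] Xn[of n] Tib[OF wl2[of n]] by (simp add: l2norm_shift)
  obtain l r where r: "strict_mono r" and lim: "\<And>m. (\<lambda>n. X (r n) m) \<longlonglongrightarrow> l m"
    using diag_sub[of X, OF Xb] by blast
  have Xeq: "Gop \<alpha> K \<gamma> (\<lambda>m. c (m + S n)) z (X n) = y" for n
  proof -
    have "shift_pow (S n) (X n) = Ti (shift_pow (S n) y)" by (simp add: X_def shift_shift shift_0)
    thus ?thesis unfolding Gop_conj using Ti[OF wl2[of n]] by (simp add: T_def shift_shift shift_0)
  qed
  have bound: "l2 l \<and> l2norm l \<le> R" if "\<And>n. l2norm (X (r n)) \<le> R" for R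
    using l2_fatou[OF lim Xl2 that] .
  have ll2: "l2 l" using bound[of "C * l2norm y"] Xn Tib[OF wl2] by (simp add: l2norm_shift)
  have eq: "Gop \<alpha> K \<gamma> b z l = y"
  proof
    fix p
    have "eventually (\<lambda>n. Gop \<alpha> K \<gamma> b z (X (r n)) p = y p) sequentially"
    proof (rule eventually_sequentiallyI[of "nat \<bar>p - \<gamma>\<bar>"])
      fix n assume n: "nat \<bar>p - \<gamma>\<bar> \<le> n"
      have "n \<le> r n" using r by (rule seq_suble)
      hence "c (p - \<gamma> + S (r n)) = b (p - \<gamma>)" using n by (intro S) linarith
      hence "Gop \<alpha> K \<gamma> b z (X (r n)) p = Gop \<alpha> K \<gamma> (\<lambda>m. c (m + S (r n))) z (X (r n)) p"
        by (simp add: Gop_def)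
      thus "Gop \<alpha> K \<gamma> b z (X (r n)) p = y p" using Xeq by simp
    qed
    hence "(\<lambda>n. Gop \<alpha> K \<gamma> b z (X (r n)) p) \<longlonglongrightarrow> y p" by (rule tendsto_eventually)
    moreover have "(\<lambda>n. Gop \<alpha> K \<gamma> b z (X (r n)) p) \<longlonglongrightarrow> Gop \<alpha> K \<gamma> b z l p"
      by (rule Gop_tendsto) (rule lim)
    ultimately show "Gop \<alpha> K \<gamma> b z l p = y p" using LIMSEQ_unique by blast
  qed
  show ?thesis
  proof (intro exI[of _ l] conjI allI impI ll2 eq)
    fix R assume R: "\<forall>w. l2 w \<and> l2norm w = l2norm y \<longrightarrow> l2norm (inv_into l2_space (Gop \<alpha> K \<gamma> c z) w) \<le> R"
    have "l2norm (X (r n)) \<le> R" for n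
      using R wl2[of "r n"] Xn[of "r n"] by (simp add: l2norm_shift Ti_def T_def)
    thus "l2norm l \<le> R" using bound by blast
  qed
qed


lemma Gop_inv:
  assumes K: "finite K" and bM: "\<And>n. cmod (b n) \<le> M" and cM: "\<And>n. cmod (c n) \<le> M"
    and W: "subwords b \<subseteq> subwords c"
    and inv: "l2_invertible (Gop \<alpha> K \<gamma> c z)"
  shows "l2_invertible (Gop \<alpha> K \<gamma> b z) \<and>
    l2_opnorm (inv_into l2_space (Gop \<alpha> K \<gamma> b z)) \<le> l2_opnorm (inv_into l2_space (Gop \<alpha> K \<gamma> c z))"
proof -
  define T where "T = Gop \<alpha> K \<gamma> c z"
  define B where "B = Gop \<alpha> K \<gamma> b z"
  have bij: "bij_betw T l2_space l2_space" using inv by (simp add: l2_invertible_def T_def)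
  obtain C where C: "\<And>x. l2 x \<Longrightarrow> l2norm x \<le> C * l2norm (T x)" using inv by (auto simp: l2_invertible_def T_def)
  have C0: "0 \<le> C"
  proof (rule ccontr)
    assume "\<not> 0 \<le> C"
    hence "C * l2norm (T delta0) \<le> 0" using l2norm_nonneg by (simp add: mult_nonpos_nonneg)
    thus False using C[OF delta0(1)] delta0(2) by simp
  qed
  have CB: "l2norm x \<le> C * l2norm (B x)" if "l2 x" for x
    unfolding B_def using Gop_lower_C[OF K bM cM W C0 _ that] C by (simp add: T_def)
  have inj: "inj_on B l2_space"
  proof (rule inj_onI)
    fix x1 x2 assume x: "x1 \<in> l2_space" "x2 \<in> l2_space" and e: "B x1 = B x2"
    have l: "l2 (\<lambda>n. x1 n - x2 n)" using x by (intro l2_diff) (auto simp: l2_space_def)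
    have "B (\<lambda>n. x1 n - x2 n) = (\<lambda>_. 0)" unfolding B_def Gop_diff using e by (simp add: B_def)
    hence "l2norm (\<lambda>n. x1 n - x2 n) \<le> 0" using CB[OF l] by (simp add: l2norm_zero)
    hence "(\<lambda>n. x1 n - x2 n) = (\<lambda>_. 0)" using l2norm_nonneg l2norm_zero_imp[OF l] by (simp add: order_antisym)
    thus "x1 = x2" by (metis eq_iff_diff_eq_0 ext)
  qed
  have img: "B ` l2_space = l2_space"
  proof
    show "B ` l2_space \<subseteq> l2_space" unfolding B_def l2_space_def using Gop_l2[OF K bM] by auto
    show "l2_space \<subseteq> B ` l2_space"
    proof
      fix y assume "y \<in> l2_space"
      then obtain x where "l2 x" "B x = y" using Gop_surj[OF K bM cM W inv] by (auto simp: l2_space_def B_def)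
      thus "y \<in> B ` l2_space" by (auto simp: l2_space_def)
    qed
  qed
  have invB: "l2_invertible B" unfolding l2_invertible_def bij_betw_def using inj img CB by blast
  have bdd: "bdd_above {l2norm (inv_into l2_space T x) |x. l2 x \<and> l2norm x \<le> 1}"
  proof (rule bdd_aboveI[of _ C], clarify)
    fix x assume x: "l2 x" "l2norm x \<le> 1"
    have "x \<in> T ` l2_space" using bij_betw_imp_surj_on[OF bij] x by (simp add: l2_space_def)
    hence "l2 (inv_into l2_space T x)" "T (inv_into l2_space T x) = x"
      using inv_into_into[of x T l2_space] f_inv_into_f[of x T l2_space] by (auto simp: l2_space_def)
    hence "l2norm (inv_into l2_space T x) \<le> C * l2norm x" using C by metis
    also have "\<dots> \<le> C * 1" using x C0 by (intro mult_left_mono) auto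
    finally show "l2norm (inv_into l2_space T x) \<le> C" by simp
  qed
  have "l2_opnorm (inv_into l2_space B) \<le> l2_opnorm (inv_into l2_space T)"
    unfolding l2_opnorm_def
  proof (rule cSup_least)
    show "{l2norm (inv_into l2_space B x) |x. l2 x \<and> l2norm x \<le> 1} \<noteq> {}"
      using l2_zero l2norm_zero by force
    fix v assume "v \<in> {l2norm (inv_into l2_space B x) |x. l2 x \<and> l2norm x \<le> 1}"
    then obtain y where y: "l2 y" "l2norm y \<le> 1" "v = l2norm (inv_into l2_space B y)" by blast
    obtain x where x: "l2 x" "B x = y"
      and xb: "\<And>R. (\<forall>w. l2 w \<and> l2norm w = l2norm y \<longrightarrow> l2norm (inv_into l2_space T w) \<le> R) \<Longrightarrow> l2norm x \<le> R"
      using Gop_surj[OF K bM cM W inv y(1)] unfolding B_def T_def by blast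
    have "inv_into l2_space B y = x" using inj x by (intro inv_into_f_eq) (auto simp: l2_space_def)
    moreover have "l2norm x \<le> Sup {l2norm (inv_into l2_space T x) |x. l2 x \<and> l2norm x \<le> 1}"
      using y(2) by (intro xb allI impI cSup_upper[OF _ bdd]) auto
    ultimately show "v \<le> Sup {l2norm (inv_into l2_space T x) |x. l2 x \<and> l2norm x \<le> 1}" using y by simp
  qed
  thus ?thesis using invB by (simp add: B_def T_def)
qed


lemma band_shift_inv:
  assumes "band_op L" and comm: "\<forall>x. l2 x \<longrightarrow> L (shift x) = shift (L x)"
  shows "\<exists>\<alpha> K. finite K \<and> (\<forall>x n. L x n = (\<Sum>k\<in>K. \<alpha> k * x (n - k)))"
proof -
  obtain w :: nat and a :: "int \<Rightarrow> int \<Rightarrow> complex" where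
    L: "L = (\<lambda>x n. \<Sum>k\<in>{- int w..int w}. mult_op (a k) (shift_pow k x) n)"
    using assms(1) unfolding band_op_def by blast
  define K where "K = {- int w..int w}"
  have Lx: "L x n = (\<Sum>k\<in>K. a k n * x (n - k))" for x n
    by (simp add: L K_def mult_op_def shift_pow_def)
  have step: "a k0 n = a k0 (n - 1)" if k0: "k0 \<in> K" for k0 n
  proof -
    define d where "d = (\<lambda>p. if p = n - 1 - k0 then 1 else (0::complex))"
    have "d = shift_pow (n - 1 - k0) delta0" by (auto simp: d_def shift_pow_def delta0_def)
    hence dl: "l2 d" using delta0(1) by (simp add: l2_shift_iff)
    have ev: "(\<Sum>k\<in>K. f k * d (m - k)) = f k0" if "m = n - 1" for f m
    proof -
      have "(\<Sum>k\<in>K. f k * d (m - k)) = (\<Sum>k\<in>K. if k = k0 then f k else 0)"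
        by (rule sum.cong) (auto simp: d_def that)
      thus ?thesis using k0 by (simp add: K_def)
    qed
    have "L (shift d) n = shift (L d) n" using comm dl by simp
    hence "(\<Sum>k\<in>K. a k n * d (n - k - 1)) = (\<Sum>k\<in>K. a k (n - 1) * d (n - 1 - k))"
      by (simp add: Lx shift_def)
    also have "\<dots> = a k0 (n - 1)" by (rule ev) simp
    also have "(\<Sum>k\<in>K. a k n * d (n - k - 1)) = (\<Sum>k\<in>K. a k n * d ((n - 1) - k))" by (simp add: algebra_simps)
    also have "\<dots> = a k0 n" by (rule ev) simp
    finally show ?thesis .
  qed
  have const: "a k n = a k 0" if "k \<in> K" for k n
  proof (induction n rule: int_induct[of _ 0])
    case base show ?case by simp
  next
    case (step1 i) thus ?case using step[OF that, of "i + 1"] by simp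
  next
    case (step2 i) thus ?case using step[OF that, of i] by simp
  qed
  show ?thesis
  proof (rule exI[of _ "\<lambda>k. a k 0"], rule exI[of _ K], intro conjI allI)
    show "finite K" by (simp add: K_def)
    fix x n show "L x n = (\<Sum>k\<in>K. a k 0 * x (n - k))"
      unfolding Lx
    proof (rule sum.cong)
      fix k assume "k \<in> K" thus "a k n * x (n - k) = a k 0 * x (n - k)" using const[of k n] by simp
    qed simp
  qed
qed

theorem theorem4p3:
  fixes \<Sigma> :: "complex set" and L :: "(int \<Rightarrow> complex) \<Rightarrow> (int \<Rightarrow> complex)"
    and \<gamma> :: int and b c :: "int \<Rightarrow> complex"
  assumes "\<Sigma> \<noteq> {}" and "compact \<Sigma>"
    and "band_op L"
    and "\<forall>x. l2 x \<longrightarrow> L (shift x) = shift (L x)"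
    and "\<forall>n. b n \<in> \<Sigma>" and "\<forall>n. c n \<in> \<Sigma>"
    and "subwords b \<subseteq> subwords c"
  shows "lower_norm (H_op L \<gamma> b) \<ge> lower_norm (H_op L \<gamma> c) \<and>
      (\<forall>z. inv_norm (op_minus_scalar (H_op L \<gamma> b) z)
              \<le> inv_norm (op_minus_scalar (H_op L \<gamma> c) z)) \<and>
      spectrum_l2 (H_op L \<gamma> b) \<subseteq> spectrum_l2 (H_op L \<gamma> c) \<and>
      (\<forall>\<epsilon>>0. pseudospectrum_l2 \<epsilon> (H_op L \<gamma> b) \<subseteq> pseudospectrum_l2 \<epsilon> (H_op L \<gamma> c))"
proof -
  obtain \<alpha> K where K: "finite K" and Lx: "\<And>x n. L x n = (\<Sum>k\<in>K. \<alpha> k * x (n - k))"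
    using band_shift_inv[OF assms(3,4)] by blast
  obtain M where M: "\<And>x. x \<in> \<Sigma> \<Longrightarrow> cmod x \<le> M"
    using compact_imp_bounded[OF assms(2)] unfolding bounded_iff by blast
  have bM: "\<And>n. cmod (b n) \<le> M" and cM: "\<And>n. cmod (c n) \<le> M" using M assms(5,6) by auto
  note W = assms(7)
  have opeq: "op_minus_scalar (H_op L \<gamma> u) z = Gop \<alpha> K \<gamma> u z" for u z
    by (intro ext) (simp add: op_minus_scalar_def H_op_def Gop_def Lx shift_pow_def mult_op_def)
  have Heq: "H_op L \<gamma> u = Gop \<alpha> K \<gamma> u 0" for u
    by (intro ext) (simp add: H_op_def Gop_def Lx shift_pow_def mult_op_def)
  have opG: "op_minus_scalar (Gop \<alpha> K \<gamma> u 0) z = Gop \<alpha> K \<gamma> u z" for u z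
    by (intro ext) (simp add: op_minus_scalar_def Gop_def)
  have invn: "inv_norm (Gop \<alpha> K \<gamma> b z) \<le> inv_norm (Gop \<alpha> K \<gamma> c z)" for z
  proof (cases "l2_invertible (Gop \<alpha> K \<gamma> c z)")
    case True
    from Gop_inv[OF K bM cM W True] show ?thesis using True by (simp add: inv_norm_def)
  next
    case False thus ?thesis by (simp add: inv_norm_def)
  qed
  have spec: "spectrum_l2 (Gop \<alpha> K \<gamma> b 0) \<subseteq> spectrum_l2 (Gop \<alpha> K \<gamma> c 0)"
    unfolding spectrum_l2_def opG using Gop_inv[OF K bM cM W] by blast
  have lown: "lower_norm (Gop \<alpha> K \<gamma> c 0) \<le> lower_norm (Gop \<alpha> K \<gamma> b 0)"
    unfolding lower_norm_def
  proof (rule cInf_greatest)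
    show "{l2norm (Gop \<alpha> K \<gamma> b 0 x) |x. l2 x \<and> l2norm x = 1} \<noteq> {}" using delta0 by blast
    fix v assume "v \<in> {l2norm (Gop \<alpha> K \<gamma> b 0 x) |x. l2 x \<and> l2norm x = 1}"
    then obtain x where x: "l2 x" "l2norm x = 1" "v = l2norm (Gop \<alpha> K \<gamma> b 0 x)" by blast
    have bdd: "bdd_below {l2norm (Gop \<alpha> K \<gamma> c 0 x) |x. l2 x \<and> l2norm x = 1}"
      by (rule bdd_belowI[of _ 0]) (auto simp: l2norm_nonneg)
    show "Inf {l2norm (Gop \<alpha> K \<gamma> c 0 x) |x. l2 x \<and> l2norm x = 1} \<le> v"
      unfolding x(3)
      by (rule Gop_lower_unit[OF K bM cM W _ x(1,2)]) (auto intro!: cInf_lower[OF _ bdd])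
  qed
  show ?thesis
  proof (intro conjI allI impI)
    show "lower_norm (H_op L \<gamma> c) \<le> lower_norm (H_op L \<gamma> b)" using lown by (simp add: Heq)
    fix z show "inv_norm (op_minus_scalar (H_op L \<gamma> b) z) \<le> inv_norm (op_minus_scalar (H_op L \<gamma> c) z)"
      using invn by (simp only: opeq)
  next
    show "spectrum_l2 (H_op L \<gamma> b) \<subseteq> spectrum_l2 (H_op L \<gamma> c)" using spec by (simp add: Heq)
  next
    fix \<epsilon> :: real assume "0 < \<epsilon>"
    show "pseudospectrum_l2 \<epsilon> (H_op L \<gamma> b) \<subseteq> pseudospectrum_l2 \<epsilon> (H_op L \<gamma> c)"
      unfolding pseudospectrum_l2_def opeq using invn by (auto simp: Heq opG intro: less_le_trans)
  qed
qed

end
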